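(* Let $n\ge 3$ and let $j_1,\dots,j_{n-2}$ be an enumeration (linear order) of the set $\{2,\dots,n-1\}$. For $t=1,\dots,n-2$, let $J_t$ be the maximal set of consecutive integers contained in $\{2,\dots,n-1\}\setminus\{j_1,\dots,j_{t-1}\}$ that contains $j_t$, let $ext(J_t)=\{\min J_t-1,\dots,\max J_t+1\}$, and let $T_t=\{abc\in\Lambda:\ a,c\in ext(J_t),\ a<j_t<c\}$. For $S\subseteq\{1,\dots,n-2\}$ put $T_S=\bigcup_{t\in S}T_t$. Then $\mathbf D=\{T_S: S\subseteq\{1,\dots,n-2\}\}$ consists of tilings, has exactly $2^{n-2}$ elements, is closed under $T\mapsto\Lambda\setminus T$ (i.e. is symmetric), and is a Condorcet super-domain.
   Context: Fix an integer $n\ge 3$ and write $[n]=\{1,\dots,n\}$. Let $\Lambda$ be the set of 3-element subsets of $[n]$; a triple $\{a,b,c\}$ with $a<b<c$ is written $abc$. For a 4-element subset $F=\{i<j<k<l\}$ of $[n]$, the stick of $F$ is the sequence $(ijk,\ ijl,\ ikl,\ jkl)$. A tiling (the inversion set of a rhombus tiling of the zonogon $Z(n;2)$) is a subset $T\subseteq\Lambda$ such that for every 4-element $F\subseteq[n]$, $T\cap\mathrm{stick}(F)$ is an initial segment or a final segment of the stick (empty set and whole stick allowed). For a finite set $V$ of odd cardinality and tilings $(T_v)_{v\in V}$, $sm((T_v)_{v\in V})$ is the set of triples lying in $T_v$ for more than $|V|/2$ indices $v$. A set $\mathbf D$ of tilings is a Condorcet super-domain if for every finite $V$ of odd cardinality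 and every family $(T_v)_{v\in V}$ with all $T_v\in\mathbf D$, $sm((T_v)_{v\in V})$ is a tiling. *)

theory Defs
  imports Main
begin

text \<open>Triples \<open>abc\<close> are represented as 3-element subsets of \<open>{1..n}\<close>.\<close>

definition Lambda :: "nat \<Rightarrow> nat set set" where
  "Lambda n = {X. X \<subseteq> {1..n} \<and> card X = 3}"

definition stick :: "nat \<Rightarrow> nat \<Rightarrow> nat \<Rightarrow> nat \<Rightarrow> nat set list" where
  "stick i j k l = [{i,j,k}, {i,j,l}, {i,k,l}, {j,k,l}]"

definition tiling :: "nat \<Rightarrow> nat set set \<Rightarrow> bool" where
  "tiling n T \<longleftrightarrow> T \<subseteq> Lambda n \<and>
     (\<forall>i j k l. 1 \<le> i \<and> i < j \<and> j < k \<and> k < l \<and> l \<le> n \<longrightarrow>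
        (\<exists>m \<le> 4. T \<inter> set (stick i j k l) = set (take m (stick i j k l))) \<or>
        (\<exists>m \<le> 4. T \<inter> set (stick i j k l) = set (drop m (stick i j k l))))"

definition sm :: "'v set \<Rightarrow> ('v \<Rightarrow> nat set set) \<Rightarrow> nat set set" where
  "sm V T = {x. 2 * card {v \<in> V. x \<in> T v} > card V}"

text \<open>Condorcet super-domain (voter sets are finite sets of naturals, which is no loss
  of generality since any finite index set embeds in nat).\<close>
definition condorcet_super_domain :: "nat \<Rightarrow> nat set set set \<Rightarrow> bool" where
  "condorcet_super_domain n D \<longleftrightarrow>
     (\<forall>(V :: nat set) (T :: nat \<Rightarrow> nat set set).
        finite V \<and> odd (card V) \<and> (\<forall>v\<in>V. T v \<in> D) \<longrightarrow> tiling n (sm V T))"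

definition max_block :: "nat set \<Rightarrow> nat \<Rightarrow> nat set" where
  "max_block R x = (THE I. (\<exists>a b. I = {a..b}) \<and> x \<in> I \<and> I \<subseteq> R \<and>
      (\<forall>a b. x \<in> {a..b} \<and> {a..b} \<subseteq> R \<longrightarrow> {a..b} \<subseteq> I))"

definition ext_block :: "nat set \<Rightarrow> nat set" where
  "ext_block J = {Min J - 1 .. Max J + 1}"

definition Jt :: "nat \<Rightarrow> (nat \<Rightarrow> nat) \<Rightarrow> nat \<Rightarrow> nat set" where
  "Jt n j t = max_block ({2..n-1} - j ` {1..<t}) (j t)"

definition Tt :: "nat \<Rightarrow> (nat \<Rightarrow> nat) \<Rightarrow> nat \<Rightarrow> nat set set" where
  "Tt n j t = {{a,b,c} | a b c. 1 \<le> a \<and> a < b \<and> b < c \<and> c \<le> n \<and>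
      a \<in> ext_block (Jt n j t) \<and> c \<in> ext_block (Jt n j t) \<and> a < j t \<and> j t < c}"

definition TS :: "nat \<Rightarrow> (nat \<Rightarrow> nat) \<Rightarrow> nat set \<Rightarrow> nat set set" where
  "TS n j S = (\<Union>t\<in>S. Tt n j t)"

definition domainD :: "nat \<Rightarrow> (nat \<Rightarrow> nat) \<Rightarrow> nat set set set" where
  "domainD n j = TS n j ` Pow {1..n-2}"

end

theory Submission
  imports Defs
begin

lemma mb:
  assumes fin: "finite R" and xR: "x \<in> R"
  shows "\<exists>lo hi. max_block R x = {lo..hi} \<and> lo \<le> x \<and> x \<le> hi \<and>
           (\<forall>y. (lo \<le> y \<and> y \<le> hi) \<longleftrightarrow> {min x y..max x y} \<subseteq> R)"
proof -
  define I0 where "I0 = {y. {min x y..max x y} \<subseteq> R}"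
  have sub: "I0 \<subseteq> R" unfolding I0_def by auto
  have fI: "finite I0" using sub fin finite_subset by blast
  have xI: "x \<in> I0" unfolding I0_def using xR by auto
  define lo where "lo = Min I0"
  define hi where "hi = Max I0"
  have loI: "lo \<in> I0" unfolding lo_def using fI xI Min_in by blast
  have hiI: "hi \<in> I0" unfolding hi_def using fI xI Max_in by blast
  have lox: "lo \<le> x" unfolding lo_def using fI xI by simp
  have hix: "x \<le> hi" unfolding hi_def using fI xI by simp
  have eq: "I0 = {lo..hi}"
  proof
    show "I0 \<subseteq> {lo..hi}" unfolding lo_def hi_def using fI by auto
    show "{lo..hi} \<subseteq> I0"
    proof
      fix y assume y: "y \<in> {lo..hi}"
      show "y \<in> I0"
      proof (cases "y \<le> x")
        case True
        have "min x lo = lo" "max x lo = x" using lox by auto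
        then have "{lo..x} \<subseteq> R" using loI unfolding I0_def by simp
        then show ?thesis using True y unfolding I0_def by (auto simp: min_def max_def)
      next
        case False
        have "min x hi = x" "max x hi = hi" using hix by auto
        then have "{x..hi} \<subseteq> R" using hiI unfolding I0_def by simp
        then show ?thesis using False y unfolding I0_def by (auto simp: min_def max_def)
      qed
    qed
  qed
  have mx: "{a..b} \<subseteq> I0" if "x \<in> {a..b}" "{a..b} \<subseteq> R" for a b
  proof
    fix y assume "y \<in> {a..b}"
    then have "{min x y..max x y} \<subseteq> {a..b}" using that(1) by auto
    then show "y \<in> I0" using that(2) unfolding I0_def by blast
  qed
  have "max_block R x = I0"
    unfolding max_block_def
  proof (rule the_equality)
    show "(\<exists>a b. I0 = {a..b}) \<and> x \<in> I0 \<and> I0 \<subseteq> R \<and>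
      (\<forall>a b. x \<in> {a..b} \<and> {a..b} \<subseteq> R \<longrightarrow> {a..b} \<subseteq> I0)"
    proof (intro conjI allI impI)
      show "\<exists>a b. I0 = {a..b}" using eq by blast
    qed (use xI sub mx in auto)
  next
    fix I assume P: "(\<exists>a b. I = {a..b}) \<and> x \<in> I \<and> I \<subseteq> R \<and>
      (\<forall>a b. x \<in> {a..b} \<and> {a..b} \<subseteq> R \<longrightarrow> {a..b} \<subseteq> I)"
    then obtain a b where I: "I = {a..b}" by blast
    have "I \<subseteq> I0" using P I mx by blast
    moreover have "I0 \<subseteq> I" using P eq xI sub by metis
    ultimately show "I = I0" by blast
  qed
  moreover have "\<forall>y. (lo \<le> y \<and> y \<le> hi) \<longleftrightarrow> {min x y..max x y} \<subseteq> R"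
  proof
    fix y
    have "(lo \<le> y \<and> y \<le> hi) \<longleftrightarrow> y \<in> I0" using eq by auto
    also have "\<dots> \<longleftrightarrow> {min x y..max x y} \<subseteq> R" unfolding I0_def by simp
    finally show "(lo \<le> y \<and> y \<le> hi) \<longleftrightarrow> {min x y..max x y} \<subseteq> R" .
  qed
  ultimately show ?thesis using eq lox hix by blast
qed


lemma Min_Max_ivl: "(lo::nat) \<le> hi \<Longrightarrow> Min {lo..hi} = lo \<and> Max {lo..hi} = hi"
  by (auto intro!: Min_eqI Max_eqI)

lemma cond_Jt:
  assumes bij: "bij_betw j {1..n-2} {2..n-1}" and t: "t \<in> {1..n-2}"
    and a1: "1 \<le> a" and cn: "c \<le> n" and ajt: "a < j t" and jtc: "j t < c"
  shows "(a \<in> ext_block (Jt n j t) \<and> c \<in> ext_block (Jt n j t)) \<longleftrightarrow>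
         (\<forall>s\<in>{1..<t}. \<not> (a < j s \<and> j s < c))"
proof -
  define R where "R = {2..n-1} - j ` {1..<t}"
  define x where "x = j t"
  have fin: "finite R" unfolding R_def by simp
  have x1: "x \<in> {2..n-1}" unfolding x_def using bij t bij_betwE by blast
  have x2: "x \<notin> j ` {1..<t}"
  proof
    assume "x \<in> j ` {1..<t}"
    then obtain s where s: "s \<in> {1..<t}" "j s = j t" unfolding x_def by auto
    have "s \<in> {1..n-2}" using s t by auto
    then have "s = t" using bij s t unfolding bij_betw_def inj_on_def by blast
    then show False using s by auto
  qed
  have xR: "x \<in> R" unfolding R_def using x1 x2 by blast
  obtain lo hi where L: "max_block R x = {lo..hi}" "lo \<le> x" "x \<le> hi"
    "\<forall>y. (lo \<le> y \<and> y \<le> hi) \<longleftrightarrow> {min x y..max x y} \<subseteq> R"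
    using mb[OF fin xR] by blast
  have J: "Jt n j t = {lo..hi}" unfolding Jt_def using L(1) unfolding R_def x_def by simp
  have E: "ext_block (Jt n j t) = {lo-1..hi+1}" unfolding J ext_block_def
    using Min_Max_ivl[of lo hi] L(2,3) by simp
  have step1: "(a \<in> ext_block (Jt n j t) \<and> c \<in> ext_block (Jt n j t)) \<longleftrightarrow> {a+1..c-1} \<subseteq> R"
  proof
    assume A: "a \<in> ext_block (Jt n j t) \<and> c \<in> ext_block (Jt n j t)"
    show "{a+1..c-1} \<subseteq> R"
    proof
      fix y assume y: "y \<in> {a+1..c-1}"
      then have "lo \<le> y \<and> y \<le> hi" using A E by auto
      then have "{min x y..max x y} \<subseteq> R" using L(4) by blast
      then show "y \<in> R" by auto
    qed
  next
    assume A: "{a+1..c-1} \<subseteq> R"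
    have "{min x (a+1)..max x (a+1)} \<subseteq> {a+1..c-1}" using ajt jtc unfolding x_def by auto
    then have "lo \<le> a+1" using A L(4) by blast
    moreover have "{min x (c-1)..max x (c-1)} \<subseteq> {a+1..c-1}" using ajt jtc unfolding x_def by auto
    then have "c-1 \<le> hi" using A L(4) by blast
    ultimately show "a \<in> ext_block (Jt n j t) \<and> c \<in> ext_block (Jt n j t)"
      unfolding E using L(2,3) ajt jtc unfolding x_def by auto
  qed
  have step2: "{a+1..c-1} \<subseteq> R \<longleftrightarrow> (\<forall>s\<in>{1..<t}. \<not> (a < j s \<and> j s < c))"
  proof
    assume A: "{a+1..c-1} \<subseteq> R"
    show "\<forall>s\<in>{1..<t}. \<not> (a < j s \<and> j s < c)"
    proof (intro ballI notI)
      fix s assume s: "s \<in> {1..<t}" "a < j s \<and> j s < c"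
      then have "j s \<in> {a+1..c-1}" by auto
      then have "j s \<in> R" using A by blast
      then show False using s unfolding R_def by auto
    qed
  next
    assume A: "\<forall>s\<in>{1..<t}. \<not> (a < j s \<and> j s < c)"
    show "{a+1..c-1} \<subseteq> R"
    proof
      fix y assume y: "y \<in> {a+1..c-1}"
      have "y \<notin> j ` {1..<t}" using A y by auto
      moreover have "y \<in> {2..n-1}" using y a1 cn by auto
      ultimately show "y \<in> R" unfolding R_def by blast
    qed
  qed
  show ?thesis using step1 step2 by blast
qed


definition fsep :: "nat \<Rightarrow> (nat \<Rightarrow> nat) \<Rightarrow> nat \<Rightarrow> nat \<Rightarrow> nat \<Rightarrow> bool" where
  "fsep n j a c t \<longleftrightarrow> t \<in> {1..n-2} \<and> a < j t \<and> j t < c \<and> (\<forall>s\<in>{1..<t}. \<not> (a < j s \<and> j s < c))"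

lemma memTt:
  assumes bij: "bij_betw j {1..n-2} {2..n-1}" and t: "t \<in> {1..n-2}"
  shows "X \<in> Tt n j t \<longleftrightarrow> (\<exists>a b c. X = {a,b,c} \<and> 1 \<le> a \<and> a < b \<and> b < c \<and> c \<le> n \<and> fsep n j a c t)"
proof
  assume "X \<in> Tt n j t"
  then obtain a b c where X: "X = {a,b,c}" "1 \<le> a" "a < b" "b < c" "c \<le> n"
     "a \<in> ext_block (Jt n j t)" "c \<in> ext_block (Jt n j t)" "a < j t" "j t < c"
    unfolding Tt_def by blast
  have "fsep n j a c t" unfolding fsep_def using cond_Jt[OF bij t X(2) X(5) X(8) X(9)] X t by blast
  then show "\<exists>a b c. X = {a,b,c} \<and> 1 \<le> a \<and> a < b \<and> b < c \<and> c \<le> n \<and> fsep n j a c t"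
    using X by blast
next
  assume "\<exists>a b c. X = {a,b,c} \<and> 1 \<le> a \<and> a < b \<and> b < c \<and> c \<le> n \<and> fsep n j a c t"
  then obtain a b c where X: "X = {a,b,c}" "1 \<le> a" "a < b" "b < c" "c \<le> n" "fsep n j a c t"
    by blast
  have "a < j t" "j t < c" using X(6) unfolding fsep_def by auto
  then have "a \<in> ext_block (Jt n j t) \<and> c \<in> ext_block (Jt n j t)"
    using cond_Jt[OF bij t X(2) X(5)] X(6) unfolding fsep_def by blast
  then show "X \<in> Tt n j t" unfolding Tt_def using X \<open>a < j t\<close> \<open>j t < c\<close> by blast
qed

lemma sorted3:
  assumes "card X = 3" shows "\<exists>a b c. X = {a,b,c} \<and> a < b \<and> b < (c::nat)"
proof -
  obtain x y z where X: "X = {x,y,z}" "x \<noteq> y" "y \<noteq> z" "x \<noteq> z"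
    using assms unfolding card_3_iff by blast
  have "x < y \<and> y < z \<or> x < z \<and> z < y \<or> y < x \<and> x < z \<or> y < z \<and> z < x \<or> z < x \<and> x < y \<or> z < y \<and> y < x"
    using X(2-4) by linarith
  then show ?thesis
  proof (elim disjE)
    assume h: "x < y \<and> y < z" show ?thesis by (rule exI[of _ x], rule exI[of _ y], rule exI[of _ z]) (simp add: X(1) h)
  next
    assume h: "x < z \<and> z < y" show ?thesis by (rule exI[of _ x], rule exI[of _ z], rule exI[of _ y]) (simp add: X(1) h insert_commute)
  next
    assume h: "y < x \<and> x < z" show ?thesis by (rule exI[of _ y], rule exI[of _ x], rule exI[of _ z]) (simp add: X(1) h insert_commute)
  next
    assume h: "y < z \<and> z < x" show ?thesis by (rule exI[of _ y], rule exI[of _ z], rule exI[of _ x]) (simp add: X(1) h insert_commute)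
  next
    assume h: "z < x \<and> x < y" show ?thesis by (rule exI[of _ z], rule exI[of _ x], rule exI[of _ y]) (simp add: X(1) h insert_commute)
  next
    assume h: "z < y \<and> y < x" show ?thesis by (rule exI[of _ z], rule exI[of _ y], rule exI[of _ x]) (simp add: X(1) h insert_commute)
  qed
qed
lemma MinMax3: "(a::nat) < b \<Longrightarrow> b < c \<Longrightarrow> Min {a,b,c} = a \<and> Max {a,b,c} = c"
  by auto

lemma Lam3: "X \<in> Lambda n \<longleftrightarrow> (\<exists>a b c. X = {a,b,c} \<and> 1 \<le> a \<and> a < b \<and> b < c \<and> c \<le> n)"
proof
  assume "X \<in> Lambda n"
  then have X: "X \<subseteq> {1..n}" "card X = 3" unfolding Lambda_def by auto
  obtain a b c where "X = {a,b,c}" "a < b" "b < c" using sorted3[OF X(2)] by blast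
  then show "\<exists>a b c. X = {a,b,c} \<and> 1 \<le> a \<and> a < b \<and> b < c \<and> c \<le> n" using X(1) by auto
next
  assume "\<exists>a b c. X = {a,b,c} \<and> 1 \<le> a \<and> a < b \<and> b < c \<and> c \<le> n"
  then obtain a b c where "X = {a,b,c}" "1 \<le> a" "a < b" "b < c" "c \<le> n" by blast
  then show "X \<in> Lambda n" unfolding Lambda_def by auto
qed

lemma memTt2:
  assumes bij: "bij_betw j {1..n-2} {2..n-1}" and t: "t \<in> {1..n-2}"
  shows "X \<in> Tt n j t \<longleftrightarrow> X \<in> Lambda n \<and> fsep n j (Min X) (Max X) t"
  unfolding memTt[OF bij t] Lam3
proof
  assume "\<exists>a b c. X = {a,b,c} \<and> 1 \<le> a \<and> a < b \<and> b < c \<and> c \<le> n \<and> fsep n j a c t"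
  then obtain a b c where X: "X = {a,b,c}" "1 \<le> a" "a < b" "b < c" "c \<le> n" "fsep n j a c t" by blast
  then show "(\<exists>a b c. X = {a,b,c} \<and> 1 \<le> a \<and> a < b \<and> b < c \<and> c \<le> n) \<and> fsep n j (Min X) (Max X) t"
    using MinMax3[OF X(3,4)] by metis
next
  assume "(\<exists>a b c. X = {a,b,c} \<and> 1 \<le> a \<and> a < b \<and> b < c \<and> c \<le> n) \<and> fsep n j (Min X) (Max X) t"
  then obtain a b c where X: "X = {a,b,c}" "1 \<le> a" "a < b" "b < c" "c \<le> n" "fsep n j (Min X) (Max X) t" by blast
  then show "\<exists>a b c. X = {a,b,c} \<and> 1 \<le> a \<and> a < b \<and> b < c \<and> c \<le> n \<and> fsep n j a c t"
    using MinMax3[OF X(3,4)] by metis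
qed

lemma fsep_unique: "fsep n j a c t1 \<Longrightarrow> fsep n j a c t2 \<Longrightarrow> t1 = t2"
  unfolding fsep_def by (metis atLeastLessThan_iff atLeastAtMost_iff linorder_neqE_nat)

lemma fsep_exists:
  assumes bij: "bij_betw j {1..n-2} {2..n-1}" and "1 \<le> a" "a < b" "b < c" "c \<le> n"
  shows "\<exists>t. fsep n j a c t"
proof -
  have "a+1 \<in> {2..n-1}" using assms by auto
  then obtain t0 where t0: "t0 \<in> {1..n-2}" "j t0 = a+1" using bij bij_betw_iff_bijections by metis
  define P where "P t \<longleftrightarrow> t \<in> {1..n-2} \<and> a < j t \<and> j t < c" for t
  have "P t0" unfolding P_def using t0 assms by auto
  define t where "t = (LEAST t. P t)"
  have Pt: "P t" unfolding t_def using \<open>P t0\<close> by (rule LeastI)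
  have "\<forall>s\<in>{1..<t}. \<not> (a < j s \<and> j s < c)"
  proof (intro ballI notI)
    fix s assume s: "s \<in> {1..<t}" "a < j s \<and> j s < c"
    then have "P s" unfolding P_def using Pt unfolding P_def by auto
    then have "t \<le> s" unfolding t_def by (rule Least_le)
    then show False using s by auto
  qed
  then have "fsep n j a c t" using Pt unfolding P_def fsep_def by simp
  then show ?thesis by blast
qed

definition tau :: "nat \<Rightarrow> (nat \<Rightarrow> nat) \<Rightarrow> nat set \<Rightarrow> nat" where
  "tau n j X = (THE t. fsep n j (Min X) (Max X) t)"

lemma tau:
  assumes bij: "bij_betw j {1..n-2} {2..n-1}" and X: "X \<in> Lambda n"
  shows "fsep n j (Min X) (Max X) t \<longleftrightarrow> t = tau n j X"
proof -
  from X[unfolded Lam3] obtain a b c where abc: "X = {a,b,c}" "1 \<le> a" "a < b" "b < c" "c \<le> n" by blast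
  have mm: "Min X = a" "Max X = c" using MinMax3[OF abc(3,4)] abc(1) by auto
  obtain t0 where t0: "fsep n j a c t0"
    using fsep_exists[OF bij abc(2-5)] by blast
  have "tau n j X = t0" unfolding tau_def mm
  proof (rule the_equality)
    show "fsep n j a c t0" by (rule t0)
  next
    fix t assume "fsep n j a c t" then show "t = t0" using t0 by (rule fsep_unique)
  qed
  then show ?thesis unfolding mm using t0 fsep_unique by metis
qed

lemma memTS:
  assumes bij: "bij_betw j {1..n-2} {2..n-1}" and S: "S \<subseteq> {1..n-2}"
  shows "X \<in> TS n j S \<longleftrightarrow> X \<in> Lambda n \<and> tau n j X \<in> S"
proof
  assume "X \<in> TS n j S"
  then obtain t where t: "t \<in> S" "X \<in> Tt n j t" unfolding TS_def by blast
  have "t \<in> {1..n-2}" using t S by blast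
  then have "X \<in> Lambda n \<and> fsep n j (Min X) (Max X) t" using memTt2[OF bij, of t X] t by simp
  then show "X \<in> Lambda n \<and> tau n j X \<in> S" using tau[OF bij, of X t] t by simp
next
  assume A: "X \<in> Lambda n \<and> tau n j X \<in> S"
  then have "fsep n j (Min X) (Max X) (tau n j X)" using tau[OF bij, of X "tau n j X"] by simp
  moreover have "tau n j X \<in> {1..n-2}" using A S by blast
  ultimately have "X \<in> Tt n j (tau n j X)" using memTt2[OF bij, of "tau n j X" X] A by simp
  then show "X \<in> TS n j S" unfolding TS_def using A by blast
qed


lemma tau_prop:
  assumes bij: "bij_betw j {1..n-2} {2..n-1}" and X: "X \<in> Lambda n"
  shows "fsep n j (Min X) (Max X) (tau n j X)"
  using tau[OF bij X, of "tau n j X"] by simp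

lemma tau_range:
  assumes bij: "bij_betw j {1..n-2} {2..n-1}" and X: "X \<in> Lambda n"
  shows "tau n j X \<in> {1..n-2}"
  using tau_prop[OF bij X] unfolding fsep_def by blast

lemma TS_sub: "S \<subseteq> {1..n-2} \<Longrightarrow> bij_betw j {1..n-2} {2..n-1} \<Longrightarrow> TS n j S \<subseteq> Lambda n"
  using memTS by blast

lemma fsep_split:
  assumes "fsep n j i l t" "i < p" "p < k" "k < l"
  shows "fsep n j i k t \<or> fsep n j p l t"
proof (cases "j t < k")
  case True
  then show ?thesis using assms unfolding fsep_def by auto
next
  case False
  then show ?thesis using assms unfolding fsep_def by auto
qed

lemma pat:
  assumes "P b \<longleftrightarrow> P c" "(P b \<longleftrightarrow> P a) \<or> (P b \<longleftrightarrow> P d)"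
  shows "(\<exists>m\<le>4. set (filter P [a,b,c,d]) = set (take m [a,b,c,d])) \<or>
         (\<exists>m\<le>4. set (filter P [a,b,c,d]) = set (drop m [a,b,c,d]))"
proof -
  consider "P b" "P a" "P d" | "P b" "P a" "\<not> P d" | "P b" "\<not> P a" "P d"
    | "\<not> P b" "P a" "\<not> P d" | "\<not> P b" "\<not> P a" "P d" | "\<not> P b" "\<not> P a" "\<not> P d"
    using assms(2) by blast
  then show ?thesis
  proof cases
    case 1 then show ?thesis using assms(1) by (intro disjI1 exI[of _ 4]) simp
  next
    case 2 then show ?thesis using assms(1) by (intro disjI1 exI[of _ 3]) simp
  next
    case 3 then show ?thesis using assms(1) by (intro disjI2 exI[of _ 1]) simp
  next
    case 4 then show ?thesis using assms(1) by (intro disjI1 exI[of _ 1]) simp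
  next
    case 5 then show ?thesis using assms(1) by (intro disjI2 exI[of _ 3]) simp
  next
    case 6 then show ?thesis using assms(1) by (intro disjI1 exI[of _ 0]) simp
  qed
qed

lemma tiling_TS:
  assumes bij: "bij_betw j {1..n-2} {2..n-1}" and S: "S \<subseteq> {1..n-2}"
  shows "tiling n (TS n j S)"
  unfolding tiling_def
proof (intro conjI allI impI)
  show "TS n j S \<subseteq> Lambda n" using TS_sub[OF S bij] .
  fix i p k l assume A: "1 \<le> i \<and> i < p \<and> p < k \<and> k < l \<and> l \<le> n"
  define P where "P X \<longleftrightarrow> X \<in> TS n j S" for X
  define X1 where "X1 = {i,p,k}"
  define X2 where "X2 = {i,p,l}"
  define X3 where "X3 = {i,k,l}"
  define X4 where "X4 = {p,k,l}"
  have L: "X1 \<in> Lambda n" "X2 \<in> Lambda n" "X3 \<in> Lambda n" "X4 \<in> Lambda n"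
    unfolding Lambda_def X1_def X2_def X3_def X4_def using A by auto
  have M: "Min X1 = i" "Max X1 = k" "Min X2 = i" "Max X2 = l" "Min X3 = i" "Max X3 = l"
     "Min X4 = p" "Max X4 = l"
    unfolding X1_def X2_def X3_def X4_def using A MinMax3 by auto
  have f1: "fsep n j i k (tau n j X1)" using tau_prop[OF bij L(1)] M by simp
  have f2: "fsep n j i l (tau n j X2)" using tau_prop[OF bij L(2)] M by simp
  have f4: "fsep n j p l (tau n j X4)" using tau_prop[OF bij L(4)] M by simp
  have t23: "tau n j X2 = tau n j X3" unfolding tau_def M ..
  have "fsep n j i k (tau n j X2) \<or> fsep n j p l (tau n j X2)"
    using fsep_split[OF f2] A by blast
  then have t2: "tau n j X2 = tau n j X1 \<or> tau n j X2 = tau n j X4"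
    using f1 f4 fsep_unique by blast
  have PX: "P X \<longleftrightarrow> tau n j X \<in> S" if "X \<in> Lambda n" for X
    unfolding P_def using memTS[OF bij S] that by blast
  have c1: "P X2 \<longleftrightarrow> P X3" using PX L t23 by simp
  have c2: "(P X2 \<longleftrightarrow> P X1) \<or> (P X2 \<longleftrightarrow> P X4)" using PX L t2 by metis
  have st: "stick i p k l = [X1,X2,X3,X4]" unfolding stick_def X1_def X2_def X3_def X4_def ..
  have "TS n j S \<inter> set (stick i p k l) = set (filter P (stick i p k l))"
    unfolding P_def by auto
  then show "(\<exists>m\<le>4. TS n j S \<inter> set (stick i p k l) = set (take m (stick i p k l))) \<or>
        (\<exists>m\<le>4. TS n j S \<inter> set (stick i p k l) = set (drop m (stick i p k l)))"
    using pat[of P X2 X3 X1 X4, OF c1 c2] unfolding st by simp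
qed

lemma card3: "(a::nat) < b \<Longrightarrow> b < c \<Longrightarrow> card {a,b,c} = 3" by simp

lemma tau_single:
  assumes bij: "bij_betw j {1..n-2} {2..n-1}" and t: "t \<in> {1..n-2}"
  shows "{j t - 1, j t, j t + 1} \<in> Lambda n \<and> tau n j {j t - 1, j t, j t + 1} = t"
proof -
  have jt: "j t \<in> {2..n-1}" using bij t bij_betwE by blast
  define X where "X = {j t - 1, j t, j t + 1}"
  have c3: "card X = 3" unfolding X_def using jt by (intro card3) auto
  have L: "X \<in> Lambda n" unfolding Lambda_def using c3 jt unfolding X_def by auto
  have M: "Min X = j t - 1" "Max X = j t + 1" unfolding X_def using MinMax3[of "j t - 1" "j t" "j t + 1"] jt by auto
  have "fsep n j (j t - 1) (j t + 1) t"
    unfolding fsep_def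
  proof (intro conjI ballI notI)
    show "t \<in> {1..n-2}" by (rule t)
    show "j t - 1 < j t" using jt by auto
    show "j t < j t + 1" by simp
  next
    fix s assume s: "s \<in> {1..<t}" "j t - 1 < j s \<and> j s < j t + 1"
    then have "j s = j t" by auto
    moreover have "s \<in> {1..n-2}" using s t by auto
    ultimately have "s = t" using bij t unfolding bij_betw_def inj_on_def by blast
    then show False using s by auto
  qed
  then have "tau n j X = t" using tau[OF bij L, of t] M by simp
  then show ?thesis using L unfolding X_def by simp
qed

theorem theorem3:
  fixes n :: nat and j :: "nat \<Rightarrow> nat"
  assumes "n \<ge> 3"
    and "bij_betw j {1..n-2} {2..n-1}"
  shows "(\<forall>T \<in> domainD n j. tiling n T)
       \<and> card (domainD n j) = 2 ^ (n - 2)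
       \<and> (\<forall>T \<in> domainD n j. Lambda n - T \<in> domainD n j)
       \<and> condorcet_super_domain n (domainD n j)"
proof (intro conjI)
  note bij = assms(2)
  show P1: "\<forall>T \<in> domainD n j. tiling n T"
    unfolding domainD_def using tiling_TS[OF bij] by blast
  have inj: "inj_on (TS n j) (Pow {1..n-2})"
  proof (rule inj_onI)
    have dir: "S1 \<subseteq> S2" if S: "S1 \<in> Pow {1..n-2}" "S2 \<in> Pow {1..n-2}" "TS n j S1 = TS n j S2" for S1 S2
    proof
      fix t assume t: "t \<in> S1"
      then have tr: "t \<in> {1..n-2}" using S by blast
      define X where "X = {j t - 1, j t, j t + 1}"
      have X: "X \<in> Lambda n" "tau n j X = t" using tau_single[OF bij tr] unfolding X_def by auto
      have "X \<in> TS n j S1" using memTS[OF bij, of S1 X] S X t by auto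
      then have "X \<in> TS n j S2" using S by simp
      then show "t \<in> S2" using memTS[OF bij, of S2 X] S X by auto
    qed
    fix S1 S2 assume "S1 \<in> Pow {1..n-2}" "S2 \<in> Pow {1..n-2}" "TS n j S1 = TS n j S2"
    then show "S1 = S2" using dir by (metis subset_antisym)
  qed
  show "card (domainD n j) = 2 ^ (n - 2)"
    unfolding domainD_def using card_image[OF inj] by (simp add: card_Pow)
  show "\<forall>T \<in> domainD n j. Lambda n - T \<in> domainD n j"
  proof
    fix T assume "T \<in> domainD n j"
    then obtain S where S: "S \<subseteq> {1..n-2}" "T = TS n j S" unfolding domainD_def by blast
    have "Lambda n - T = TS n j ({1..n-2} - S)"
    proof (rule set_eqI)
      fix X
      show "X \<in> Lambda n - T \<longleftrightarrow> X \<in> TS n j ({1..n-2} - S)"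
        using memTS[OF bij S(1), of X] memTS[OF bij, of "{1..n-2} - S" X] tau_range[OF bij, of X] S(2)
        by auto
    qed
    then show "Lambda n - T \<in> domainD n j" unfolding domainD_def by blast
  qed
  show "condorcet_super_domain n (domainD n j)"
    unfolding condorcet_super_domain_def
  proof (intro allI impI)
    fix V :: "nat set" and T :: "nat \<Rightarrow> nat set set"
    assume A: "finite V \<and> odd (card V) \<and> (\<forall>v\<in>V. T v \<in> domainD n j)"
    define Sv where "Sv v = (SOME S. S \<subseteq> {1..n-2} \<and> T v = TS n j S)" for v
    have Sv: "Sv v \<subseteq> {1..n-2} \<and> T v = TS n j (Sv v)" if "v \<in> V" for v
    proof -
      have "\<exists>S. S \<subseteq> {1..n-2} \<and> T v = TS n j S" using A that unfolding domainD_def by blast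
      then show ?thesis unfolding Sv_def by (rule someI_ex)
    qed
    define Ss where "Ss = {t \<in> {1..n-2}. 2 * card {v \<in> V. t \<in> Sv v} > card V}"
    have Ssub: "Ss \<subseteq> {1..n-2}" unfolding Ss_def by blast
    have "sm V T = TS n j Ss"
    proof (rule set_eqI)
      fix X
      show "X \<in> sm V T \<longleftrightarrow> X \<in> TS n j Ss"
      proof (cases "X \<in> Lambda n")
        case True
        have "{v \<in> V. X \<in> T v} = {v \<in> V. tau n j X \<in> Sv v}"
        proof (rule Collect_cong)
          fix v show "(v \<in> V \<and> X \<in> T v) \<longleftrightarrow> (v \<in> V \<and> tau n j X \<in> Sv v)"
          proof (cases "v \<in> V")
            case True
            then show ?thesis using Sv[OF True] memTS[OF bij, of "Sv v" X] \<open>X \<in> Lambda n\<close> by simp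
          qed simp
        qed
        then have "X \<in> sm V T \<longleftrightarrow> tau n j X \<in> Ss"
          unfolding sm_def Ss_def using tau_range[OF bij True] by simp
        also have "\<dots> \<longleftrightarrow> X \<in> TS n j Ss" using memTS[OF bij Ssub, of X] True by simp
        finally show ?thesis .
      next
        case False
        have E: "{v \<in> V. X \<in> T v} = {}"
        proof (rule equals0I)
          fix v assume v: "v \<in> {v \<in> V. X \<in> T v}"
          then have "X \<in> TS n j (Sv v)" using Sv by auto
          then show False using memTS[OF bij, of "Sv v" X] Sv v False by auto
        qed
        have "X \<notin> sm V T" unfolding sm_def mem_Collect_eq E by simp
        then show ?thesis using memTS[OF bij Ssub, of X] False by simp
      qed
    qed
    then show "tiling n (sm V T)" using tiling_TS[OF bij Ssub] by simp
  qed
qed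

end
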